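(* Let $A$ be a set. The assignment on objects $(X,S)\mapsto (A\times X,S)$ and on morphisms $\mathcal{H}\mapsto (A\rightarrow\mathcal{H})$ defines a functor $A\rightarrow\_ : \mathsf{Open}\rightarrow\mathsf{Open}$.
   Context: An open game $\mathcal{G}:(X,S)\rightarrow(Y,R)$ (for sets $X,Y,R,S$) consists of a set $\Sigma_\mathcal{G}$ of strategy profiles, a play function $P_\mathcal{G}:\Sigma_\mathcal{G}\rightarrow(X\rightarrow Y)$, a coutility function $C_\mathcal{G}:\Sigma_\mathcal{G}\rightarrow(X\times R\rightarrow S)$, and an equilibrium function $E_\mathcal{G}:X\times(Y\rightarrow R)\rightarrow\mathcal{P}\Sigma_\mathcal{G}$ (written $E_\mathcal{G}\,x\,k$). The category $\mathsf{Open}$ has as objects pairs of sets $(X,S)$ and as morphisms $(X,S)\rightarrow(Y,R)$ open games, considered up to isomorphism of strategy sets (a bijection of strategy sets compatible with play, coutility and equilibrium functions). The identity on $(X,S)$ has strategy set $\mathbf{1}$, play function the identity on $X$, coutility $(x,s)\mapsto s$, and equilibrium function returning all strategies. The composite of $\mathcal{G}:(X,S)\rightarrow(Y,R)$ and $\mathcal{H}:(Y,R)\rightarrow(Z,Q)$ is $\mathcal{H}\circ\mathcal{G}:(X,S)\rightarrow(Z,Q)$ with strategies $\Sigma_\mathcal{G}\times\Sigma_\mathcal{H}$, play $P\,(\sigma_1,\sigma_2)\,x=P_\mathcal{H}\,\sigma_2\,(P_\mathcal{G}\,\sigma_1\,x)$, coutility $C\,(\sigma_1,\sigma_2)\,(x,q)=C_\mathcal{G}\,\sigma_1\,(x,\,C_\mathcal{H}\,\sigma_2\,(P_\mathcal{G}\,\sigma_1\,x,\,q))$,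 and $(\sigma_1,\sigma_2)\in E_{\mathcal{H}\circ\mathcal{G}}\,x\,k$ iff $\sigma_1\in E_\mathcal{G}\,x\,k'$ where $k'\,y=C_\mathcal{H}\,\sigma_2\,(y,\,k(P_\mathcal{H}\,\sigma_2\,y))$, and $\sigma_2\in E_\mathcal{H}\,(P_\mathcal{G}\,\sigma'\,x)\,k$ for all $\sigma'\in\Sigma_\mathcal{G}$. For a set $A$ and a game $\mathcal{H}:(X,S)\rightarrow(Y,R)$ with strategies $\Sigma_\mathcal{H}$, the game $A\rightarrow\mathcal{H}:(A\times X,S)\rightarrow(A\times Y,R)$ has strategy set $A\rightarrow\Sigma_\mathcal{H}$ (functions $f:A\rightarrow\Sigma_\mathcal{H}$), play function $P\,f\,(a,x)=(a,\,P_\mathcal{H}\,(fa)\,x)$, coutility $C\,f\,((a,x),r)=C_\mathcal{H}\,(fa)\,(x,r)$, and equilibrium: $f\in E_{A\rightarrow\mathcal{H}}\,(a,x)\,k$ (for $k:A\times Y\rightarrow R$) iff for all $a'\in A$, $fa'\in E_\mathcal{H}\,x\,(k(a',\_))$. *)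

theory Defs
  imports "HOL-Library.FuncSet"
begin

text \<open>Object sets are carrier sets X, S, Y, R inside
  ambient types; the strategy set is a carrier set inside an ambient type 'g.\<close>

record ('g, 'x, 's, 'y, 'r) ogame =
  strat :: "'g set"
  play :: "'g \<Rightarrow> 'x \<Rightarrow> 'y"
  coutil :: "'g \<Rightarrow> 'x \<times> 'r \<Rightarrow> 's"
  equil :: "'x \<Rightarrow> ('y \<Rightarrow> 'r) \<Rightarrow> 'g set"

definition is_open_game ::
  "'x set \<Rightarrow> 's set \<Rightarrow> 'y set \<Rightarrow> 'r set \<Rightarrow> ('g, 'x, 's, 'y, 'r) ogame \<Rightarrow> bool" where
  "is_open_game X S Y R G \<longleftrightarrow>
     (\<forall>\<sigma>\<in>strat G. \<forall>x\<in>X. play G \<sigma> x \<in> Y) \<and>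
     (\<forall>\<sigma>\<in>strat G. \<forall>x\<in>X. \<forall>r\<in>R. coutil G \<sigma> (x, r) \<in> S) \<and>
     (\<forall>x\<in>X. \<forall>k\<in>Y \<rightarrow>\<^sub>E R. equil G x k \<subseteq> strat G)"

definition game_iso ::
  "'x set \<Rightarrow> 'y set \<Rightarrow> 'r set \<Rightarrow> ('g, 'x, 's, 'y, 'r) ogame \<Rightarrow> ('h, 'x, 's, 'y, 'r) ogame \<Rightarrow> bool" where
  "game_iso X Y R G H \<longleftrightarrow>
     (\<exists>f. bij_betw f (strat G) (strat H) \<and>
       (\<forall>\<sigma>\<in>strat G.
          (\<forall>x\<in>X. play H (f \<sigma>) x = play G \<sigma> x) \<and>
          (\<forall>x\<in>X. \<forall>r\<in>R. coutil H (f \<sigma>) (x, r) = coutil G \<sigma> (x, r)) \<and>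
          (\<forall>x\<in>X. \<forall>k\<in>Y \<rightarrow>\<^sub>E R. \<sigma> \<in> equil G x k \<longleftrightarrow> f \<sigma> \<in> equil H x k)))"

definition id_game :: "(unit, 'x, 's, 'x, 's) ogame" where
  "id_game = \<lparr> strat = {()}, play = (\<lambda>_ x. x), coutil = (\<lambda>_ (x, s). s),
               equil = (\<lambda>_ _. {()}) \<rparr>"

text \<open>Composite H \<circ> G of G : (X,S) -> (Y,R) and H : (Y,R) -> (Z,Q);
  the parameter Y is needed to form the continuation k' : Y -> R.\<close>
definition comp_game ::
  "'y set \<Rightarrow> ('g, 'x, 's, 'y, 'r) ogame \<Rightarrow> ('h, 'y, 'r, 'z, 'q) ogame
     \<Rightarrow> ('g \<times> 'h, 'x, 's, 'z, 'q) ogame" where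
  "comp_game Y G H = \<lparr>
     strat = strat G \<times> strat H,
     play = (\<lambda>(\<sigma>1, \<sigma>2) x. play H \<sigma>2 (play G \<sigma>1 x)),
     coutil = (\<lambda>(\<sigma>1, \<sigma>2) (x, q). coutil G \<sigma>1 (x, coutil H \<sigma>2 (play G \<sigma>1 x, q))),
     equil = (\<lambda>x k. {(\<sigma>1, \<sigma>2). \<sigma>1 \<in> strat G \<and> \<sigma>2 \<in> strat H \<and>
                 \<sigma>1 \<in> equil G x (\<lambda>y\<in>Y. coutil H \<sigma>2 (y, k (play H \<sigma>2 y))) \<and>
                 (\<forall>\<sigma>'\<in>strat G. \<sigma>2 \<in> equil H (play G \<sigma>' x) k)}) \<rparr>"

definition fun_game ::
  "'a set \<Rightarrow> 'y set \<Rightarrow> ('g, 'x, 's, 'y, 'r) ogame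
     \<Rightarrow> ('a \<Rightarrow> 'g, 'a \<times> 'x, 's, 'a \<times> 'y, 'r) ogame" where
  "fun_game A Y H = \<lparr>
     strat = A \<rightarrow>\<^sub>E strat H,
     play = (\<lambda>f (a, x). (a, play H (f a) x)),
     coutil = (\<lambda>f ((a, x), r). coutil H (f a) (x, r)),
     equil = (\<lambda>(a, x) k. {f \<in> A \<rightarrow>\<^sub>E strat H.
                 \<forall>a'\<in>A. f a' \<in> equil H x (\<lambda>y\<in>Y. k (a', y))}) \<rparr>"

end

theory Submission
  imports Defs
begin


lemma p1: "is_open_game X S Y R H \<Longrightarrow> is_open_game (A \<times> X) S (A \<times> Y) R (fun_game A Y H)"
  unfolding is_open_game_def fun_game_def by (auto simp: PiE_iff extensional_def)

lemma p2:
  assumes "game_iso X Y R G G'"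
  shows "game_iso (A \<times> X) (A \<times> Y) R (fun_game A Y G) (fun_game A Y G')"
proof -
  obtain f where bf: "bij_betw f (strat G) (strat G')" and
    c: "\<forall>\<sigma>\<in>strat G.
          (\<forall>x\<in>X. play G' (f \<sigma>) x = play G \<sigma> x) \<and>
          (\<forall>x\<in>X. \<forall>r\<in>R. coutil G' (f \<sigma>) (x, r) = coutil G \<sigma> (x, r)) \<and>
          (\<forall>x\<in>X. \<forall>k\<in>Y \<rightarrow>\<^sub>E R. \<sigma> \<in> equil G x k \<longleftrightarrow> f \<sigma> \<in> equil G' x k)"
    using assms unfolding game_iso_def by blast
  define g where "g = inv_into (strat G) f"
  have g1: "\<And>s. s \<in> strat G' \<Longrightarrow> g s \<in> strat G \<and> f (g s) = s"
    using bf unfolding g_def by (meson bij_betw_inv_into bij_betwE bij_betw_inv_into_right)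
  have g2: "\<And>s. s \<in> strat G \<Longrightarrow> g (f s) = s"
    using bf unfolding g_def by (meson bij_betw_inv_into_left)
  have fs: "\<And>s. s \<in> strat G \<Longrightarrow> f s \<in> strat G'" using bf bij_betwE by blast
  define F where "F = (\<lambda>\<phi>. \<lambda>a\<in>A. f (\<phi> a))"
  have bF: "bij_betw F (A \<rightarrow>\<^sub>E strat G) (A \<rightarrow>\<^sub>E strat G')"
  proof (rule bij_betw_byWitness[where f'="\<lambda>\<psi>. \<lambda>a\<in>A. g (\<psi> a)"])
    show "\<forall>a\<in>A \<rightarrow>\<^sub>E strat G. (\<lambda>aa\<in>A. g (F a aa)) = a"
      by (auto simp: F_def g2 PiE_iff fun_eq_iff)
    show "\<forall>a'\<in>A \<rightarrow>\<^sub>E strat G'. F (\<lambda>a\<in>A. g (a' a)) = a'"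
      by (auto simp: F_def g1 PiE_iff fun_eq_iff)
    show "F ` (A \<rightarrow>\<^sub>E strat G) \<subseteq> A \<rightarrow>\<^sub>E strat G'"
      by (auto simp: F_def fs PiE_iff)
    show "(\<lambda>\<psi>. \<lambda>a\<in>A. g (\<psi> a)) ` (A \<rightarrow>\<^sub>E strat G') \<subseteq> A \<rightarrow>\<^sub>E strat G"
      by (auto simp: g1 PiE_iff)
  qed
  have kr: "\<And>k a. k \<in> A \<times> Y \<rightarrow>\<^sub>E R \<Longrightarrow> a \<in> A \<Longrightarrow> (\<lambda>y\<in>Y. k (a, y)) \<in> Y \<rightarrow>\<^sub>E R"
    by (auto simp: PiE_iff)
  have Fm: "\<And>\<phi> a. \<phi> \<in> A \<rightarrow>\<^sub>E strat G \<Longrightarrow> a \<in> A \<Longrightarrow> F \<phi> a = f (\<phi> a)"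
    by (simp add: F_def)
  have Fe: "\<And>\<phi>. \<phi> \<in> A \<rightarrow>\<^sub>E strat G \<Longrightarrow> F \<phi> \<in> A \<rightarrow>\<^sub>E strat G'"
    using bF bij_betwE by blast
  show ?thesis unfolding game_iso_def
    apply (intro exI[of _ F] conjI)
    subgoal using bF by (simp add: fun_game_def)
    subgoal using c Fm Fe kr by (auto simp: fun_game_def PiE_iff)
    done
qed

lemma p3: "game_iso (A \<times> X) (A \<times> X) S (fun_game A X id_game) id_game"
  unfolding game_iso_def
proof (intro exI[of _ "\<lambda>_. ()"] conjI ballI)
  have "A \<rightarrow>\<^sub>E {()} = {\<lambda>a\<in>A. ()}" by (auto simp: PiE_iff fun_eq_iff)
  thus "bij_betw (\<lambda>_. ()) (strat (fun_game A X id_game)) (strat id_game)"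
    by (simp add: fun_game_def id_game_def bij_betw_def)
qed (auto simp: fun_game_def id_game_def PiE_iff)

lemma fg_mem: "f \<in> equil (fun_game A Y H) (a, x) k \<longleftrightarrow>
   f \<in> A \<rightarrow>\<^sub>E strat H \<and> (\<forall>a'\<in>A. f a' \<in> equil H x (\<lambda>y\<in>Y. k (a', y)))"
  by (simp add: fun_game_def)

lemma cg_mem: "(s1, s2) \<in> equil (comp_game Y G H) x kk \<longleftrightarrow>
   s1 \<in> strat G \<and> s2 \<in> strat H \<and> s1 \<in> equil G x (\<lambda>y\<in>Y. coutil H s2 (y, kk (play H s2 y))) \<and>
   (\<forall>\<sigma>'\<in>strat G. s2 \<in> equil H (play G \<sigma>' x) kk)"
  by (simp add: comp_game_def)

lemma p4:
  fixes G :: "('g,'x,'s,'y,'r) ogame" and H :: "('h,'y,'r,'z,'q) ogame"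
  assumes oG: "is_open_game X S Y R G" and oH: "is_open_game Y R Z Q H"
  shows "game_iso (A \<times> X) (A \<times> Z) Q (fun_game A Z (comp_game Y G H))
                (comp_game (A \<times> Y) (fun_game A Y G) (fun_game A Z H))"
proof -
  have pH: "\<And>s y. s \<in> strat H \<Longrightarrow> y \<in> Y \<Longrightarrow> play H s y \<in> Z"
    using oH unfolding is_open_game_def by blast
  define F where "F = (\<lambda>\<phi>::_ \<Rightarrow> 'g \<times> 'h. (\<lambda>a\<in>A. fst (\<phi> a), \<lambda>a\<in>A. snd (\<phi> a)))"
  have bF: "bij_betw F (A \<rightarrow>\<^sub>E (strat G \<times> strat H)) ((A \<rightarrow>\<^sub>E strat G) \<times> (A \<rightarrow>\<^sub>E strat H))"
  proof (rule bij_betw_byWitness[where f'="\<lambda>(p, q). \<lambda>a\<in>A. (p a, q a)"])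
    show "\<forall>a\<in>A \<rightarrow>\<^sub>E (strat G \<times> strat H). (\<lambda>(p, q). \<lambda>a\<in>A. (p a, q a)) (F a) = a"
      by (auto simp: F_def PiE_iff fun_eq_iff extensional_def)
    show "\<forall>a'\<in>(A \<rightarrow>\<^sub>E strat G) \<times> (A \<rightarrow>\<^sub>E strat H). F ((\<lambda>(p, q). \<lambda>a\<in>A. (p a, q a)) a') = a'"
      by (auto simp: F_def PiE_iff fun_eq_iff extensional_def)
    show "F ` (A \<rightarrow>\<^sub>E (strat G \<times> strat H)) \<subseteq> (A \<rightarrow>\<^sub>E strat G) \<times> (A \<rightarrow>\<^sub>E strat H)"
      by (force simp: F_def PiE_iff mem_Times_iff)
    show "(\<lambda>(p, q). \<lambda>a\<in>A. (p a, q a)) ` ((A \<rightarrow>\<^sub>E strat G) \<times> (A \<rightarrow>\<^sub>E strat H)) \<subseteq> A \<rightarrow>\<^sub>E (strat G \<times> strat H)"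
      by (auto simp: PiE_iff)
  qed
  show ?thesis unfolding game_iso_def
  proof (intro exI[of _ F] conjI)
    show "bij_betw F (strat (fun_game A Z (comp_game Y G H)))
      (strat (comp_game (A \<times> Y) (fun_game A Y G) (fun_game A Z H)))"
      using bF by (simp add: fun_game_def comp_game_def)
    show "\<forall>\<sigma>\<in>strat (fun_game A Z (comp_game Y G H)).
       (\<forall>x\<in>A \<times> X. play (comp_game (A \<times> Y) (fun_game A Y G) (fun_game A Z H)) (F \<sigma>) x =
                    play (fun_game A Z (comp_game Y G H)) \<sigma> x) \<and>
       (\<forall>x\<in>A \<times> X. \<forall>r\<in>Q. coutil (comp_game (A \<times> Y) (fun_game A Y G) (fun_game A Z H)) (F \<sigma>) (x, r) =
                    coutil (fun_game A Z (comp_game Y G H)) \<sigma> (x, r)) \<and>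
       (\<forall>x\<in>A \<times> X. \<forall>k\<in>A \<times> Z \<rightarrow>\<^sub>E Q.
           (\<sigma> \<in> equil (fun_game A Z (comp_game Y G H)) x k) =
           (F \<sigma> \<in> equil (comp_game (A \<times> Y) (fun_game A Y G) (fun_game A Z H)) x k))"
    proof (intro ballI conjI)
      fix \<phi> assume "\<phi> \<in> strat (fun_game A Z (comp_game Y G H))"
      hence \<phi>: "\<phi> \<in> A \<rightarrow>\<^sub>E (strat G \<times> strat H)" by (simp add: fun_game_def comp_game_def)
      show "play (comp_game (A \<times> Y) (fun_game A Y G) (fun_game A Z H)) (F \<phi>) x =
                    play (fun_game A Z (comp_game Y G H)) \<phi> x" if "x \<in> A \<times> X" for x
        using that by (auto simp: fun_game_def comp_game_def F_def split: prod.splits)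
      show "coutil (comp_game (A \<times> Y) (fun_game A Y G) (fun_game A Z H)) (F \<phi>) (x, r) =
                    coutil (fun_game A Z (comp_game Y G H)) \<phi> (x, r)" if "x \<in> A \<times> X" for x r
        using that by (auto simp: fun_game_def comp_game_def F_def split: prod.splits)
      show "(\<phi> \<in> equil (fun_game A Z (comp_game Y G H)) x k) =
           (F \<phi> \<in> equil (comp_game (A \<times> Y) (fun_game A Y G) (fun_game A Z H)) x k)"
        if xk: "x \<in> A \<times> X" "k \<in> A \<times> Z \<rightarrow>\<^sub>E Q" for x k
      proof -
        obtain a x0 where x: "x = (a, x0)" "a \<in> A" "x0 \<in> X" using xk(1) by auto
        define KK where "KK a' = (\<lambda>z\<in>Z. k (a', z))" for a'
        define K where "K a' s2 = (\<lambda>y\<in>Y. coutil H s2 (y, k (a', play H s2 y)))" for a' s2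
        have eqK: "(\<lambda>y\<in>Y. coutil H s2 (y, KK a' (play H s2 y))) = K a' s2" if "s2 \<in> strat H" for s2 a'
          using that pH by (auto simp: KK_def K_def intro!: restrict_ext)
        have e2: "(\<forall>\<sigma>'\<in>A \<rightarrow>\<^sub>E strat G. \<forall>a'\<in>A. P a' (\<sigma>' a)) \<longleftrightarrow> (\<forall>s\<in>strat G. \<forall>a'\<in>A. P a' s)" for P
        proof
          assume h: "\<forall>\<sigma>'\<in>A \<rightarrow>\<^sub>E strat G. \<forall>a'\<in>A. P a' (\<sigma>' a)"
          show "\<forall>s\<in>strat G. \<forall>a'\<in>A. P a' s"
          proof (intro ballI)
            fix s a' assume "s \<in> strat G" "a' \<in> A"
            hence "(\<lambda>_\<in>A. s) \<in> A \<rightarrow>\<^sub>E strat G" by auto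
            thus "P a' s" using h \<open>a' \<in> A\<close> x(2) by fastforce
          qed
        qed (use x(2) in auto)
        have sA: "\<And>a'. a' \<in> A \<Longrightarrow> fst (\<phi> a') \<in> strat G \<and> snd (\<phi> a') \<in> strat H"
          using \<phi> by (auto simp: PiE_iff mem_Times_iff)
        have L: "\<phi> \<in> equil (fun_game A Z (comp_game Y G H)) x k \<longleftrightarrow>
           (\<forall>a'\<in>A. fst (\<phi> a') \<in> equil G x0 (K a' (snd (\<phi> a'))) \<and>
               (\<forall>s\<in>strat G. snd (\<phi> a') \<in> equil H (play G s x0) (KK a')))"
        proof -
          have "\<phi> \<in> equil (fun_game A Z (comp_game Y G H)) x k \<longleftrightarrow>
             (\<forall>a'\<in>A. (fst (\<phi> a'), snd (\<phi> a')) \<in> equil (comp_game Y G H) x0 (KK a'))"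
            unfolding x(1) fg_mem KK_def using \<phi> by (simp add: comp_game_def)
          also have "\<dots> \<longleftrightarrow> (\<forall>a'\<in>A. fst (\<phi> a') \<in> equil G x0 (K a' (snd (\<phi> a'))) \<and>
               (\<forall>s\<in>strat G. snd (\<phi> a') \<in> equil H (play G s x0) (KK a')))"
            unfolding cg_mem using sA eqK by auto
          finally show ?thesis .
        qed
        have R: "F \<phi> \<in> equil (comp_game (A \<times> Y) (fun_game A Y G) (fun_game A Z H)) x k \<longleftrightarrow>
           (\<forall>a'\<in>A. fst (\<phi> a') \<in> equil G x0 (K a' (snd (\<phi> a')))) \<and>
           (\<forall>\<sigma>'\<in>A \<rightarrow>\<^sub>E strat G. \<forall>a'\<in>A. snd (\<phi> a') \<in> equil H (play G (\<sigma>' a) x0) (KK a'))"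
        proof -
          define p1 where "p1 = (\<lambda>a\<in>A. fst (\<phi> a))"
          define p2 where "p2 = (\<lambda>a\<in>A. snd (\<phi> a))"
          have Fp: "F \<phi> = (p1, p2)" by (simp add: F_def p1_def p2_def)
          have p1m: "p1 \<in> A \<rightarrow>\<^sub>E strat G" and p2m: "p2 \<in> A \<rightarrow>\<^sub>E strat H"
            using sA by (auto simp: p1_def p2_def)
          have k1: "(\<lambda>y\<in>Y. (\<lambda>y\<in>A \<times> Y. coutil (fun_game A Z H) p2 (y, k (play (fun_game A Z H) p2 y))) (a', y))
                = K a' (snd (\<phi> a'))" if "a' \<in> A" for a'
            using that by (auto simp: fun_game_def K_def p2_def intro!: restrict_ext)
          have "F \<phi> \<in> equil (comp_game (A \<times> Y) (fun_game A Y G) (fun_game A Z H)) x k \<longleftrightarrow>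
             (\<forall>a'\<in>A. p1 a' \<in> equil G x0 (K a' (snd (\<phi> a')))) \<and>
             (\<forall>\<sigma>'\<in>A \<rightarrow>\<^sub>E strat G. \<forall>a'\<in>A. p2 a' \<in> equil H (play G (\<sigma>' a) x0) (KK a'))"
          proof -
            have pl: "play (fun_game A Y G) \<sigma>' (a, x0) = (a, play G (\<sigma>' a) x0)" for \<sigma>'
              by (simp add: fun_game_def)
            show ?thesis
              unfolding Fp cg_mem x(1) fg_mem pl
              using p1m p2m k1 by (auto simp: fun_game_def KK_def)
          qed
          thus ?thesis by (simp add: p1_def p2_def)
        qed
        show ?thesis unfolding L R
          using e2[of "\<lambda>a' s. snd (\<phi> a') \<in> equil H (play G s x0) (KK a')"] by blast
      qed
    qed
  qed
qed


theorem lemma4: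
  fixes A :: "'a set"
  shows
   "(\<forall>X S Y R (H :: ('g, 'x, 's, 'y, 'r) ogame).
       is_open_game X S Y R H \<longrightarrow> is_open_game (A \<times> X) S (A \<times> Y) R (fun_game A Y H)) \<and>
    (\<forall>X Y R (G :: ('g1, 'x1, 's1, 'y1, 'r1) ogame) (G' :: ('g2, 'x1, 's1, 'y1, 'r1) ogame).
       game_iso X Y R G G' \<longrightarrow> game_iso (A \<times> X) (A \<times> Y) R (fun_game A Y G) (fun_game A Y G')) \<and>
    (\<forall>(X :: 'x3 set) (S :: 's3 set).
       game_iso (A \<times> X) (A \<times> X) S (fun_game A X id_game) id_game) \<and>
    (\<forall>X S Y R Z Q (G :: ('g4, 'x4, 's4, 'y4, 'r4) ogame) (H :: ('h4, 'y4, 'r4, 'z4, 'q4) ogame).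
       is_open_game X S Y R G \<longrightarrow> is_open_game Y R Z Q H \<longrightarrow>
       game_iso (A \<times> X) (A \<times> Z) Q (fun_game A Z (comp_game Y G H))
                (comp_game (A \<times> Y) (fun_game A Y G) (fun_game A Z H)))"
  apply (intro conjI allI impI)
     apply (erule p1)
    apply (erule p2)
   apply (rule p3)
  apply (erule (1) p4)
  done

end
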